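(* Let $\langle A,f,g\rangle$ be a PS-algebra satisfying (ABT0) $x\leq f(x,x)$, (ABT2) $y\cdot f(x,z)\leq f(x\cdot f(x,y),z)$ and (ABT3) $f(x,g(x,-y)\cdot y)\leq y$ for all $x,y,z\in A$. Then the map $d\colon A\to A$, $d(a)=f(a,a)+-g(a,a)$, is the unary discriminator on $A$ (i.e. $d(0)=0$ and $d(a)=1$ for $a\neq0$) if and only if $\langle A,f,g\rangle$ satisfies (ABTW): for all $a\in A$, $a\neq0\Rightarrow g(a,a)\leq a$.
   Context: A PS-algebra is $\langle A,f,g\rangle$ where $A$ is a Boolean algebra with at least two elements (operations $+,\cdot,-,0,1$) and $f,g\colon A^2\to A$ satisfy: $f(x,y)=0$ whenever $x=0$ or $y=0$; $f$ is additive in each argument; $g(x,y)=1$ whenever $x=0$ or $y=0$; $g$ is co-additive in each argument ($g(x+x',y)=g(x,y)\cdot g(x',y)$, $g(x,y+y')=g(x,y)\cdot g(x,y')$). *)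

theory Defs
  imports Main
begin

text \<open>A PS-algebra on a Boolean algebra (type class boolean_algebra, with
  bot = 0, top = 1, sup = +, inf = \<cdot>, uminus = complement), required to have
  at least two elements.\<close>

definition PS_algebra :: "('a::boolean_algebra \<Rightarrow> 'a \<Rightarrow> 'a) \<Rightarrow> ('a \<Rightarrow> 'a \<Rightarrow> 'a) \<Rightarrow> bool" where
  "PS_algebra f g \<longleftrightarrow>
     (bot::'a) \<noteq> top \<and>
     (\<forall>x y. (x = bot \<or> y = bot) \<longrightarrow> f x y = bot) \<and>
     (\<forall>x x' y. f (sup x x') y = sup (f x y) (f x' y)) \<and>
     (\<forall>x y y'. f x (sup y y') = sup (f x y) (f x y')) \<and>
     (\<forall>x y. (x = bot \<or> y = bot) \<longrightarrow> g x y = top) \<and>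
     (\<forall>x x' y. g (sup x x') y = inf (g x y) (g x' y)) \<and>
     (\<forall>x y y'. g x (sup y y') = inf (g x y) (g x y'))"

end

theory Submission
  imports Defs
begin

theorem theorem36:
  fixes f g :: "'a::boolean_algebra \<Rightarrow> 'a \<Rightarrow> 'a"
  assumes PS: "PS_algebra f g"
    and ABT0: "\<forall>x. x \<le> f x x"
    and ABT2: "\<forall>x y z. inf y (f x z) \<le> f (inf x (f x y)) z"
    and ABT3: "\<forall>x y. f x (inf (g x (- y)) y) \<le> y"
  shows "((\<lambda>a. sup (f a a) (- g a a)) bot = bot \<and>
          (\<forall>a. a \<noteq> bot \<longrightarrow> (\<lambda>a. sup (f a a) (- g a a)) a = top))
         \<longleftrightarrow> (\<forall>a. a \<noteq> bot \<longrightarrow> g a a \<le> a)"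
proof -
  have f0: "\<And>x y. (x = bot \<or> y = bot) \<Longrightarrow> f x y = bot" and g0: "\<And>x y. (x = bot \<or> y = bot) \<Longrightarrow> g x y = top"
  proof -
    have c: "(\<forall>x y. (x = bot \<or> y = bot) \<longrightarrow> f x y = bot) \<and> (\<forall>x y. (x = bot \<or> y = bot) \<longrightarrow> g x y = top)"
      using PS unfolding PS_algebra_def by (elim conjE) (intro conjI; assumption)
    show "\<And>x y. (x = bot \<or> y = bot) \<Longrightarrow> f x y = bot" using c by blast
    show "\<And>x y. (x = bot \<or> y = bot) \<Longrightarrow> g x y = top" using c by blast
  qed
  have d0: "sup (f bot bot) (- g bot bot) = bot" using f0 g0 by simp
  have "(\<forall>a. a \<noteq> bot \<longrightarrow> sup (f a a) (- g a a) = top) \<longleftrightarrow> (\<forall>a. a \<noteq> bot \<longrightarrow> g a a \<le> a)"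
  proof
    assume H: "\<forall>a. a \<noteq> bot \<longrightarrow> sup (f a a) (- g a a) = top"
    show "\<forall>a. a \<noteq> bot \<longrightarrow> g a a \<le> a"
    proof (intro allI impI)
      fix a :: 'a assume a: "a \<noteq> bot"
      have "sup (f a a) (- g a a) = top" using H a by blast
      hence "inf (g a a) (sup (f a a) (- g a a)) = g a a" by simp
      hence "inf (g a a) (f a a) = g a a" by (simp add: inf_sup_distrib1)
      hence gf: "g a a \<le> f a a" using inf.cobounded2[of "g a a" "f a a"] by simp
      define b where "b = inf (g a a) (- a)"
      have "f a (inf (g a (- (- a))) (- a)) \<le> - a" using ABT3 by blast
      hence fab: "f a b \<le> - a" unfolding b_def by simp
      have "inf b (f a a) \<le> f (inf a (f a b)) a" using ABT2 by blast
      moreover have "inf b (f a a) = b" using gf unfolding b_def by (simp add: inf.absorb1 le_infI1)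
      moreover have "inf a (f a b) = bot" using fab
      proof -
        have "inf a (f a b) \<le> inf a (- a)" using fab by (rule inf_mono[OF order_refl])
        hence "inf a (f a b) \<le> bot" by simp
        thus ?thesis by (rule le_bot)
      qed
      ultimately have "b \<le> bot" using f0 by simp
      hence "b = bot" by (rule le_bot)
      hence "inf (g a a) (- a) = bot" unfolding b_def .
      thus "g a a \<le> a" by (simp add: inf_shunt)
    qed
  next
    assume H: "\<forall>a. a \<noteq> bot \<longrightarrow> g a a \<le> a"
    show "\<forall>a. a \<noteq> bot \<longrightarrow> sup (f a a) (- g a a) = top"
    proof (intro allI impI)
      fix a :: 'a assume a: "a \<noteq> bot"
      have "- a \<le> - g a a" using H a by simp
      moreover have "a \<le> f a a" using ABT0 by blast
      ultimately have "sup a (- a) \<le> sup (f a a) (- g a a)" by (meson sup_mono)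
      thus "sup (f a a) (- g a a) = top" by (simp add: top_le)
    qed
  qed
  thus ?thesis using d0 by simp
qed

end
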